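(* Let $\mathbf{H}\in\mathbb{R}^{m\times n}$ have full column rank, rows indexed by sensors and columns by state variables. Let $\mathcal{S}_o\subseteq\{1,\dots,m\}$, $\mathbf{H}_o$ the submatrix of rows of $\mathbf{H}$ indexed by $\mathcal{S}_o$, and $\mathcal{X}_o$ the set of indices of nonzero columns of $\mathbf{H}_o$. Suppose that (i) the state variables in $\mathcal{X}_o$ are observable with respect to $\mathcal{S}_o$; (ii) $\mathcal{C}\subseteq\mathcal{S}_o$ is a critical set with respect to $(\mathcal{S}_o,\mathcal{X}_o)$; (iii) the submatrix of $\mathbf{H}$ obtained by removing the rows in $\mathcal{C}$ does not have full column rank. Let $\{\mathcal{C}_1,\mathcal{C}_2\}$ be an arbitrary partition of $\mathcal{C}$. Let $\mathbf{H}_A$ be the submatrix of $\mathbf{H}$ consisting of rows indexed by $\mathcal{S}_o\setminus\mathcal{C}_2$, $\mathbf{U}_A\in\mathbb{R}^{|\mathcal{S}_o\setminus\mathcal{C}_2|\times|\mathcal{X}_o|}$ a matrix whose columns form a basis of $\mathcal{R}(\mathbf{H}_A)$, and $\bar{\mathbf{U}}_A$ the submatrix of $\mathbf{U}_A$ obtained by removing the rows corresponding to sensors in $\mathcal{C}_1$. Then: (1) $\mathcal{N}(\bar{\mathbf{U}}_A)$ has dimension one; (2) for any nonzero $\mathbf{v}\in\mathcal{N}(\bar{\mathbf{U}}_A)$, the vector $\mathbf{a}\in\mathbb{R}^m$ with $a_i$ equal to the entry of $\mathbf{U}_A\mathbf{v}$ corresponding to sensor $i$ for $i\in\mathcal{C}_1$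 and $a_i=0$ otherwise satisfies $\mathbf{a}=\alpha\mathbf{a}^*$ for some nonzero $\alpha\in\mathbb{R}$, where $\mathbf{a}^*$ is an optimal solution of the problem (P1) in the context with $\mathcal{S}_A=\mathcal{C}_1$ and $\mathcal{S}_F=\mathcal{C}_2$.
   Context: Observability/critical sets: for a sensor set $\mathcal{S}$ and variables $\mathcal{X}$, with $\mathbf{H}_{\mathcal{S}}$ the rows of $\mathbf{H}$ in $\mathcal{S}$, the variables in $\mathcal{X}$ are observable with respect to $\mathcal{S}$ if every vector of $\mathcal{N}(\mathbf{H}_{\mathcal{S}})$ vanishes on $\mathcal{X}$; when so, $\mathcal{C}\subseteq\mathcal{S}$ is critical w.r.t. $(\mathcal{S},\mathcal{X})$ if the variables in $\mathcal{X}$ are not observable w.r.t. $\mathcal{S}\setminus\mathcal{C}$ but are observable w.r.t. $\mathcal{S}\setminus\mathcal{C}'$ for every strict subset $\mathcal{C}'\subsetneq\mathcal{C}$. Problem (P1): model $\mathbf{z}=\mathbf{H}\mathbf{x}+\mathbf{e}$, fixed $\mathbf{x}$, $\mathbf{e}\sim\mathcal{N}(\mathbf{0},\sigma^2\mathbf{I})$; $\mathcal{A}=\{\mathbf{a}: a_i=0\ \forall i\notin\mathcal{S}_A\}$; $\mathbf{W}=\mathbf{I}-\mathbf{H}(\mathbf{H}^T\mathbf{H})^{-1}\mathbf{H}^T$; normalized residue $\tilde{\mathbf{r}}=\mathbf{\Omega}\mathbf{W}(\mathbf{z}+\mathbf{a})$ with $\mathbf{\Omega}$ diagonal, $\mathbf{\Omega}_{ii}=0$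 if removing row $i$ from $\mathbf{H}$ makes it lose full column rank and $\mathbf{\Omega}_{ii}=1/\sqrt{\sigma^2\mathbf{W}_{ii}}$ otherwise; $\mathbf{H}_1$ is $\mathbf{H}$ with rows in $\mathcal{S}_F$ replaced by zero rows. (P1) is: maximize $\mathbb{E}_{\mathbf{e}}\big[\sum_{i\in\mathcal{S}_F}\tilde r_i^2\big]$ over $\mathbf{a}$ subject to $\|\mathbf{a}\|_2^2=1$ and $\mathbf{a}\in\mathcal{R}(\mathbf{H}_1)\cap\mathcal{A}$. *)

theory Defs
  imports "HOL-Probability.Probability"
begin

(* A row-submatrix H_S is represented by H with all rows outside S replaced by zero rows
   (same null space, same rank, range identified with vectors supported on S). *)
definition rowsel :: "'m set \<Rightarrow> real^'n^'m \<Rightarrow> real^'n^'m" where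
  "rowsel S H = (\<chi> i. if i \<in> S then H $ i else 0)"

definition nullsp :: "real^'n^'m \<Rightarrow> 'm set \<Rightarrow> (real^'n) set" where
  "nullsp H S = {x. \<forall>i\<in>S. (H *v x) $ i = 0}"

definition observable :: "real^'n^'m \<Rightarrow> 'm set \<Rightarrow> 'n set \<Rightarrow> bool" where
  "observable H S X \<longleftrightarrow> (\<forall>x\<in>nullsp H S. \<forall>j\<in>X. x $ j = 0)"

definition critical :: "real^'n^'m \<Rightarrow> 'm set \<Rightarrow> 'n set \<Rightarrow> 'm set \<Rightarrow> bool" where
  "critical H S X C \<longleftrightarrow> C \<subseteq> S \<and> \<not> observable H (S - C) X \<and>
      (\<forall>C'. C' \<subset> C \<longrightarrow> observable H (S - C') X)"

definition nzcols :: "real^'n^'m \<Rightarrow> 'm set \<Rightarrow> 'n set" where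
  "nzcols H S = {j. \<exists>i\<in>S. H $ i $ j \<noteq> 0}"

definition full_col_rank :: "real^'n^'m \<Rightarrow> bool" where
  "full_col_rank H \<longleftrightarrow> rank H = CARD('n)"

definition Wmat :: "real^'n^'m \<Rightarrow> real^'m^'m" where
  "Wmat H = mat 1 - H ** matrix_inv (transpose H ** H) ** transpose H"

definition Omega :: "real^'n^'m \<Rightarrow> real \<Rightarrow> real^'m^'m" where
  "Omega H \<sigma> = (\<chi> i j. if i \<noteq> j then 0
       else if \<not> full_col_rank (rowsel (- {i}) H) then 0
       else 1 / sqrt (\<sigma>\<^sup>2 * Wmat H $ i $ i))"

definition normres :: "real^'n^'m \<Rightarrow> real \<Rightarrow> real^'m \<Rightarrow> real^'m \<Rightarrow> real^'m" where
  "normres H \<sigma> z a = Omega H \<sigma> *v (Wmat H *v (z + a))"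

definition noise :: "real \<Rightarrow> ('m \<Rightarrow> real) measure" where
  "noise \<sigma> = PiM UNIV (\<lambda>_. density lborel (normal_density 0 \<sigma>))"

definition P1obj :: "real^'n^'m \<Rightarrow> real^'n \<Rightarrow> real \<Rightarrow> 'm set \<Rightarrow> real^'m \<Rightarrow> real" where
  "P1obj H x \<sigma> SF a =
     (\<integral>e. (\<Sum>i\<in>SF. (normres H \<sigma> (H *v x + (\<chi> k. e k)) a $ i)\<^sup>2) \<partial>noise \<sigma>)"

definition P1feasible :: "real^'n^'m \<Rightarrow> 'm set \<Rightarrow> 'm set \<Rightarrow> real^'m \<Rightarrow> bool" where
  "P1feasible H SA SF a \<longleftrightarrow> (norm a)\<^sup>2 = 1 \<and> a \<in> range (\<lambda>y. rowsel (- SF) H *v y)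
      \<and> (\<forall>i. i \<notin> SA \<longrightarrow> a $ i = 0)"

definition P1optimal :: "real^'n^'m \<Rightarrow> real^'n \<Rightarrow> real \<Rightarrow> 'm set \<Rightarrow> 'm set \<Rightarrow> real^'m \<Rightarrow> bool" where
  "P1optimal H x \<sigma> SA SF a \<longleftrightarrow> P1feasible H SA SF a \<and>
      (\<forall>a'. P1feasible H SA SF a' \<longrightarrow> P1obj H x \<sigma> SF a' \<le> P1obj H x \<sigma> SF a)"

end

theory Submission
  imports Defs
begin

lemma rowsel_mv: "(rowsel S H *v y) $ i = (if i \<in> S then (H *v y) $ i else 0)"
  by (simp add: rowsel_def matrix_vector_mult_def)

theorem theorem5:
  fixes H :: "real^'n^'m" and So C C1 C2 :: "'m set"
    and U :: "real^'n^'m" and x :: "real^'n" and \<sigma> :: real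
  assumes fullrank: "full_col_rank H"
    and obs: "observable H So (nzcols H So)"
    and crit: "critical H So (nzcols H So) C"
    and notfull: "\<not> full_col_rank (rowsel (- C) H)"
    and part: "C1 \<union> C2 = C" "C1 \<inter> C2 = {}" "C1 \<noteq> {}" "C2 \<noteq> {}"
    and UA_basis:
      "inj_on (\<lambda>j. \<chi> i. if i \<in> So - C2 then U $ i $ j else 0) (nzcols H So)"
      "independent ((\<lambda>j. \<chi> i. if i \<in> So - C2 then U $ i $ j else 0) ` nzcols H So)"
      "span ((\<lambda>j. \<chi> i. if i \<in> So - C2 then U $ i $ j else 0) ` nzcols H So)
         = range (\<lambda>y. rowsel (So - C2) H *v y)"
    and sigma_pos: "\<sigma> > 0"
  shows "dim {v :: real^'n. (\<forall>j. j \<notin> nzcols H So \<longrightarrow> v $ j = 0)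
                 \<and> (\<forall>i \<in> So - C2 - C1. (U *v v) $ i = 0)} = 1
    \<and> (\<forall>v :: real^'n. v \<noteq> 0 \<longrightarrow> (\<forall>j. j \<notin> nzcols H So \<longrightarrow> v $ j = 0)
          \<longrightarrow> (\<forall>i \<in> So - C2 - C1. (U *v v) $ i = 0)
          \<longrightarrow> (\<exists>\<alpha> astar. \<alpha> \<noteq> 0 \<and> P1optimal H x \<sigma> C1 C2 astar
                 \<and> (\<chi> i. if i \<in> C1 then (U *v v) $ i else 0) = \<alpha> *\<^sub>R astar))"
proof -
  define X where "X = nzcols H So"
  define f where "f = (\<lambda>j. \<chi> i. if i \<in> So - C2 then U $ i $ j else (0::real))"
  define g where "g = (\<lambda>v::real^'n. \<chi> i. if i \<in> So - C2 then (U *v v) $ i else (0::real))"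
  define V where "V = {v :: real^'n. (\<forall>j. j \<notin> X \<longrightarrow> v $ j = 0)
                 \<and> (\<forall>i \<in> So - C2 - C1. (U *v v) $ i = 0)}"
  have SoC: "So - C2 - C1 = So - C" using part by auto
  have CSo: "C \<subseteq> So" using crit unfolding critical_def by auto
  have zc: "\<And>u i. i \<in> So \<Longrightarrow> \<forall>j\<in>X. u$j = 0 \<Longrightarrow> (H *v u)$i = 0"
    by (auto simp: matrix_vector_mult_def X_def nzcols_def intro!: sum.neutral) blast
  have obsC2: "observable H (So - C2) X"
  proof -
    have "C2 \<subset> C" using part by auto
    then show ?thesis using crit unfolding critical_def X_def by blast
  qed
  have obsCc: "\<And>c. c \<in> C \<Longrightarrow> observable H (So - (C - {c})) X"
  proof -
    fix c assume "c \<in> C"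
    then have "C - {c} \<subset> C" by auto
    then show "observable H (So - (C - {c})) X" using crit unfolding critical_def X_def by blast
  qed
  have inj: "\<And>w. H *v w = 0 \<Longrightarrow> w = 0"
  proof -
    fix w :: "real^'n" assume "H *v w = 0"
    then have "H *v w = H *v 0" by simp
    moreover have "inj ((*v) H)" using fullrank full_rank_injective[of H] unfolding full_col_rank_def by blast
    ultimately show "w = 0" by (meson injD)
  qed
  obtain z where z: "z \<noteq> 0" "rowsel (-C) H *v z = 0"
    using notfull matrix_nonfull_linear_equations_eq unfolding full_col_rank_def by blast
  have zC: "\<And>i. i \<notin> C \<Longrightarrow> (H *v z)$i = 0"
    using z(2) by (metis Compl_iff rowsel_mv zero_index)
  obtain c where c: "c \<in> C1" "(H *v z)$c \<noteq> 0"
  proof -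
    have "\<exists>c\<in>C1. (H *v z)$c \<noteq> 0"
    proof (rule ccontr)
      assume "\<not> ?thesis"
      then have "z \<in> nullsp H (So - C2)" unfolding nullsp_def using zC part by auto
      then have "\<forall>j\<in>X. z$j = 0" using obsC2 unfolding observable_def by blast
      then have "H *v z = 0" using zc zC CSo by (metis subsetD vec_eq_iff zero_index)
      then show False using inj z(1) by blast
    qed
    then show ?thesis using that by blast
  qed
  have cSo: "c \<in> So - C2" using c part CSo by auto
  have B: "\<And>w. \<forall>i\<in>So - C. (H *v w)$i = 0 \<Longrightarrow> \<forall>i\<in>So. (H *v w)$i = ((H *v w)$c / (H *v z)$c) * (H *v z)$i"
  proof
    fix w i assume w: "\<forall>i\<in>So - C. (H *v w)$i = 0" and i: "i \<in> So"
    define u where "u = (H *v z)$c *\<^sub>R w - (H *v w)$c *\<^sub>R z"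
    have Hu: "\<And>k. (H *v u)$k = (H *v z)$c * (H *v w)$k - (H *v w)$c * (H *v z)$k"
      by (simp add: u_def matrix_vector_mult_diff_distrib matrix_vector_mult_scaleR)
    have "u \<in> nullsp H (So - (C - {c}))"
      unfolding nullsp_def mem_Collect_eq Hu using w zC by (auto; metis DiffI mult_zero_right mult_zero_left)
    then have "\<forall>j\<in>X. u$j = 0" using obsCc[of c] c part unfolding observable_def by blast
    then have "(H *v u)$i = 0" using zc i by blast
    then show "(H *v w)$i = ((H *v w)$c / (H *v z)$c) * (H *v z)$i"
      using Hu[of i] c(2) by (simp add: field_simps)
  qed
  have spanf: "span (f ` X) = range (\<lambda>y. rowsel (So - C2) H *v y)"
    using UA_basis(3) unfolding f_def X_def .
  have gsum: "\<And>v::real^'n. \<forall>j. j\<notin>X \<longrightarrow> v$j = 0 \<Longrightarrow> g v = (\<Sum>j\<in>X. v$j *\<^sub>R f j)"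
  proof -
    fix v :: "real^'n" assume v: "\<forall>j. j\<notin>X \<longrightarrow> v$j = 0"
    show "g v = (\<Sum>j\<in>X. v$j *\<^sub>R f j)" unfolding vec_eq_iff
    proof
      fix i
      show "g v $ i = (\<Sum>j\<in>X. v$j *\<^sub>R f j) $ i"
      proof (cases "i \<in> So - C2")
        case True
        have "(U *v v)$i = (\<Sum>j\<in>UNIV. U$i$j * v$j)" by (simp add: matrix_vector_mult_def)
        also have "\<dots> = (\<Sum>j\<in>X. U$i$j * v$j)"
          by (rule sum.mono_neutral_right) (use v in auto)
        also have "\<dots> = (\<Sum>j\<in>X. v$j *\<^sub>R f j) $ i" using True by (simp add: f_def mult.commute)
        finally show ?thesis using True by (simp add: g_def)
      next
        case False then show ?thesis by (auto simp: g_def f_def)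
      qed
    qed
  qed
  have gspan: "\<And>v::real^'n. \<forall>j. j\<notin>X \<longrightarrow> v$j = 0 \<Longrightarrow> \<exists>y. g v = rowsel (So - C2) H *v y"
  proof -
    fix v :: "real^'n" assume v: "\<forall>j. j\<notin>X \<longrightarrow> v$j = 0"
    have "(\<Sum>j\<in>X. v$j *\<^sub>R f j) \<in> span (f ` X)"
      by (intro span_sum span_scale span_base) auto
    then show "\<exists>y. g v = rowsel (So - C2) H *v y" using gsum[OF v] spanf by auto
  qed
  have ind: "independent (f ` X)" using UA_basis(2) unfolding f_def X_def .
  have injf: "inj_on f X" using UA_basis(1) unfolding f_def X_def .
  have ginj: "\<And>v::real^'n. \<forall>j. j\<notin>X \<longrightarrow> v$j = 0 \<Longrightarrow> g v = 0 \<Longrightarrow> v = 0"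
  proof -
    fix v :: "real^'n" assume v: "\<forall>j. j\<notin>X \<longrightarrow> v$j = 0" and gv: "g v = 0"
    define cc where "cc = (\<lambda>b. v $ (inv_into X f b))"
    have "(\<Sum>b\<in>f`X. cc b *\<^sub>R b) = (\<Sum>j\<in>X. cc (f j) *\<^sub>R f j)" by (simp add: sum.reindex[OF injf])
    also have "\<dots> = (\<Sum>j\<in>X. v$j *\<^sub>R f j)" by (intro sum.cong) (auto simp: cc_def injf)
    also have "\<dots> = 0" using gsum[OF v] gv by simp
    finally have "(\<Sum>b\<in>f`X. cc b *\<^sub>R b) = 0" .
    moreover have "\<And>c. (\<Sum>b\<in>f`X. c b *\<^sub>R b) = 0 \<Longrightarrow> \<forall>b\<in>f`X. c b = 0"
      using ind by (simp add: independent_explicit)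
    ultimately have "\<forall>b\<in>f`X. cc b = 0" by blast
    then have "\<forall>j\<in>X. v$j = 0" using injf by (auto simp: cc_def)
    then show "v = 0" using v by (auto simp: vec_eq_iff)
  qed
  have gsurj: "\<And>y. \<exists>v::real^'n. (\<forall>j. j\<notin>X \<longrightarrow> v$j = 0) \<and> g v = rowsel (So - C2) H *v y"
  proof -
    fix y :: "real^'n"
    have "rowsel (So - C2) H *v y \<in> span (f ` X)" using spanf by auto
    moreover have "finite (f ` X)" by simp
    ultimately have "rowsel (So - C2) H *v y \<in> range (\<lambda>u. \<Sum>b\<in>f`X. u b *\<^sub>R b)"
      using span_finite[of "f ` X"] by simp
    then obtain u where u: "rowsel (So - C2) H *v y = (\<Sum>b\<in>f`X. u b *\<^sub>R b)"
      by (rule rangeE)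
    define v :: "real^'n" where "v = (\<chi> j. if j \<in> X then u (f j) else 0)"
    have vs: "\<forall>j. j\<notin>X \<longrightarrow> v$j = 0" by (simp add: v_def)
    have "g v = (\<Sum>j\<in>X. v$j *\<^sub>R f j)" using gsum[OF vs] .
    also have "\<dots> = (\<Sum>j\<in>X. u (f j) *\<^sub>R f j)" by (intro sum.cong) (auto simp: v_def)
    also have "\<dots> = (\<Sum>b\<in>f`X. u b *\<^sub>R b)" by (simp add: sum.reindex[OF injf])
    finally show "\<exists>v::real^'n. (\<forall>j. j\<notin>X \<longrightarrow> v$j = 0) \<and> g v = rowsel (So - C2) H *v y"
      using vs u by auto
  qed
  have glin: "\<And>a b t. g (a - t *\<^sub>R b) = g a - t *\<^sub>R g b"
    by (simp add: g_def vec_eq_iff matrix_vector_mult_diff_distrib matrix_vector_mult_scaleR)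
  obtain v0 where v0: "\<forall>j. j\<notin>X \<longrightarrow> v0$j = 0" "g v0 = rowsel (So - C2) H *v z"
    using gsurj by blast
  have gv0: "\<And>i. i \<in> So - C2 \<Longrightarrow> (U *v v0)$i = (H *v z)$i"
  proof -
    fix i assume i: "i \<in> So - C2"
    have "(U *v v0)$i = (g v0)$i" using i by (simp add: g_def)
    also have "\<dots> = (rowsel (So - C2) H *v z)$i" using v0(2) by simp
    also have "\<dots> = (H *v z)$i" using i by (simp add: rowsel_mv)
    finally show "(U *v v0)$i = (H *v z)$i" .
  qed
  have v0V: "v0 \<in> V"
  proof -
    have "\<forall>i \<in> So - C2 - C1. (U *v v0) $ i = 0"
    proof
      fix i assume i: "i \<in> So - C2 - C1"
      then have "i \<notin> C" using part by blast
      then show "(U *v v0) $ i = 0" using gv0[of i] zC[of i] i by simp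
    qed
    then show ?thesis unfolding V_def using v0(1) by blast
  qed
  have v0nz: "v0 \<noteq> 0"
  proof
    assume "v0 = 0"
    then have "(U *v v0)$c = 0" by simp
    then show False using gv0[OF cSo] c(2) by simp
  qed
  have Vmult: "\<And>v::real^'n. v \<in> V \<Longrightarrow> \<exists>t. v = t *\<^sub>R v0"
  proof -
    fix v assume vV: "v \<in> V"
    then have vs: "\<forall>j. j\<notin>X \<longrightarrow> v$j = 0" unfolding V_def by auto
    obtain y where y: "g v = rowsel (So - C2) H *v y" using gspan[OF vs] by blast
    have gy: "\<And>i. i \<in> So - C2 \<Longrightarrow> (U *v v)$i = (H *v y)$i"
    proof -
      fix i assume i: "i \<in> So - C2"
      have "(U *v v)$i = (g v)$i" using i by (simp add: g_def)
      also have "\<dots> = (rowsel (So - C2) H *v y)$i" using y by simp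
      also have "\<dots> = (H *v y)$i" using i by (simp add: rowsel_mv)
      finally show "(U *v v)$i = (H *v y)$i" .
    qed
    have "\<forall>i\<in>So - C. (H *v y)$i = 0"
    proof
      fix i assume i: "i \<in> So - C"
      then have i2: "i \<in> So - C2 - C1" "i \<in> So - C2" using part by auto
      then show "(H *v y)$i = 0" using vV gy[OF i2(2)] unfolding V_def by auto
    qed
    from B[OF this] obtain t where t: "\<forall>i\<in>So. (H *v y)$i = t * (H *v z)$i" by blast
    have "g v = t *\<^sub>R g v0"
      unfolding vec_eq_iff using gy gv0 t by (auto simp: g_def)
    then have "g (v - t *\<^sub>R v0) = 0" by (simp add: glin)
    moreover have "\<forall>j. j\<notin>X \<longrightarrow> (v - t *\<^sub>R v0)$j = 0" using vs v0(1) by simp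
    ultimately have "v - t *\<^sub>R v0 = 0" using ginj by blast
    then show "\<exists>t. v = t *\<^sub>R v0" by auto
  qed
  have Vspan: "V = span {v0}"
  proof
    show "V \<subseteq> span {v0}" using Vmult by (auto simp: span_singleton)
    show "span {v0} \<subseteq> V" using v0V unfolding span_singleton V_def
      by (auto simp: matrix_vector_mult_scaleR)
  qed
  have part1: "dim V = 1" using Vspan v0nz by (simp add: dim_span)
  define az where "az = (\<chi> i. if i \<in> C1 then (H *v z)$i else 0)"
  have az_eq: "az = rowsel (-C2) H *v z"
    unfolding vec_eq_iff
  proof
    fix i
    show "az $ i = (rowsel (-C2) H *v z) $ i"
    proof (cases "i \<in> C1")
      case True then have "i \<notin> C2" using part by auto
      then show ?thesis using True by (simp add: az_def rowsel_mv)
    next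
      case False
      show ?thesis
      proof (cases "i \<in> C2")
        case True then show ?thesis using False by (simp add: az_def rowsel_mv)
      next
        case F2: False
        then have "i \<notin> C" using False part by auto
        then show ?thesis using False F2 zC[of i] by (simp add: az_def rowsel_mv)
      qed
    qed
  qed
  have aznz: "az \<noteq> 0"
  proof
    assume "az = 0"
    then have "az $ c = 0" by simp
    then show False using c by (simp add: az_def)
  qed
  define n where "n = norm az"
  have npos: "n > 0" using aznz by (simp add: n_def)
  define a0 where "a0 = (1/n) *\<^sub>R az"
  have feas: "\<And>s. s = 1 \<or> s = -1 \<Longrightarrow> P1feasible H C1 C2 (s *\<^sub>R a0)"
  proof -
    fix s :: real assume s: "s = 1 \<or> s = -1"
    have "norm (s *\<^sub>R a0) = \<bar>s\<bar> * (1/n) * n" using npos by (simp add: a0_def n_def)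
    also have "\<dots> = 1" using s npos by auto
    finally have nrm: "(norm (s *\<^sub>R a0))\<^sup>2 = 1" by simp
    have rng: "s *\<^sub>R a0 = rowsel (-C2) H *v ((s/n) *\<^sub>R z)"
      by (simp add: az_eq a0_def matrix_vector_mult_scaleR)
    have sup: "\<forall>i. i \<notin> C1 \<longrightarrow> (s *\<^sub>R a0)$i = 0" by (simp add: a0_def az_def)
    show "P1feasible H C1 C2 (s *\<^sub>R a0)" unfolding P1feasible_def using nrm rng sup by blast
  qed
  have feasonly: "\<And>a'. P1feasible H C1 C2 a' \<Longrightarrow> a' = a0 \<or> a' = -a0"
  proof -
    fix a' assume fa: "P1feasible H C1 C2 a'"
    then obtain w where w: "a' = rowsel (-C2) H *v w" and nrm: "(norm a')\<^sup>2 = 1"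
      and sup: "\<forall>i. i \<notin> C1 \<longrightarrow> a'$i = 0"
      unfolding P1feasible_def by blast
    have "\<forall>i\<in>So - C. (H *v w)$i = 0"
    proof
      fix i assume "i \<in> So - C"
      then have "i \<notin> C1" "i \<notin> C2" using part by auto
      then show "(H *v w)$i = 0" using sup w by (metis ComplI rowsel_mv)
    qed
    from B[OF this] obtain t where t: "\<forall>i\<in>So. (H *v w)$i = t * (H *v z)$i" by blast
    have a't: "a' = t *\<^sub>R az" unfolding vec_eq_iff
    proof
      fix i show "a' $ i = (t *\<^sub>R az) $ i"
      proof (cases "i \<in> C1")
        case True
        then have "i \<notin> C2" "i \<in> So" using part CSo by auto
        then show ?thesis using True t w by (simp add: rowsel_mv az_def)
      next
        case False then show ?thesis using sup by (simp add: az_def)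
      qed
    qed
    have "norm a' = 1" using nrm norm_ge_zero[of a'] by (auto simp: power2_eq_1_iff)
    then have "\<bar>t\<bar> * n = 1" using a't by (simp add: n_def)
    then have "t = 1/n \<or> t = -(1/n)" using npos by (auto simp: field_simps abs_if split: if_splits)
    then show "a' = a0 \<or> a' = -a0" using a't by (auto simp: a0_def)
  qed
  define astar where "astar = (if P1obj H x \<sigma> C2 (-a0) \<le> P1obj H x \<sigma> C2 a0 then a0 else -a0)"
  have opt: "P1optimal H x \<sigma> C1 C2 astar"
  proof -
    have f1: "P1feasible H C1 C2 a0" using feas[of 1] by simp
    have f2: "P1feasible H C1 C2 (-a0)" using feas[of "-1"] by simp
    have "P1feasible H C1 C2 astar" using f1 f2 by (simp add: astar_def)
    moreover have "\<forall>a'. P1feasible H C1 C2 a' \<longrightarrow> P1obj H x \<sigma> C2 a' \<le> P1obj H x \<sigma> C2 astar"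
    proof (intro allI impI)
      fix a' assume "P1feasible H C1 C2 a'"
      then have "a' = a0 \<or> a' = -a0" by (rule feasonly)
      then show "P1obj H x \<sigma> C2 a' \<le> P1obj H x \<sigma> C2 astar"
        by (cases "P1obj H x \<sigma> C2 (-a0) \<le> P1obj H x \<sigma> C2 a0") (auto simp: astar_def)
    qed
    ultimately show ?thesis unfolding P1optimal_def by blast
  qed
  have astar_cases: "astar = a0 \<or> astar = -a0" by (simp add: astar_def)
  have part2: "\<forall>v :: real^'n. v \<noteq> 0 \<longrightarrow> (\<forall>j. j \<notin> nzcols H So \<longrightarrow> v $ j = 0)
          \<longrightarrow> (\<forall>i \<in> So - C2 - C1. (U *v v) $ i = 0)
          \<longrightarrow> (\<exists>\<alpha> astar. \<alpha> \<noteq> 0 \<and> P1optimal H x \<sigma> C1 C2 astar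
                 \<and> (\<chi> i. if i \<in> C1 then (U *v v) $ i else 0) = \<alpha> *\<^sub>R astar)"
  proof (intro allI impI)
    fix v :: "real^'n"
    assume vnz: "v \<noteq> 0" and vs: "\<forall>j. j \<notin> nzcols H So \<longrightarrow> v $ j = 0"
      and vn: "\<forall>i \<in> So - C2 - C1. (U *v v) $ i = 0"
    have "v \<in> V" unfolding V_def X_def using vs vn by blast
    then obtain t where t: "v = t *\<^sub>R v0" using Vmult by blast
    have tnz: "t \<noteq> 0" using t vnz by auto
    have eq: "(\<chi> i. if i \<in> C1 then (U *v v) $ i else 0) = (t * n) *\<^sub>R a0"
      unfolding vec_eq_iff
    proof
      fix i show "(\<chi> i. if i \<in> C1 then (U *v v) $ i else 0) $ i = ((t * n) *\<^sub>R a0) $ i"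
      proof (cases "i \<in> C1")
        case True
        then have "i \<in> So - C2" using part CSo by auto
        then show ?thesis using True gv0 npos
          by (simp add: t a0_def az_def matrix_vector_mult_scaleR)
      next
        case False then show ?thesis by (simp add: a0_def az_def)
      qed
    qed
    show "\<exists>\<alpha> astar. \<alpha> \<noteq> 0 \<and> P1optimal H x \<sigma> C1 C2 astar
                 \<and> (\<chi> i. if i \<in> C1 then (U *v v) $ i else 0) = \<alpha> *\<^sub>R astar"
    proof (cases "astar = a0")
      case True then show ?thesis using eq opt tnz npos by (intro exI[of _ "t * n"] exI[of _ astar]) auto
    next
      case False
      then have "astar = -a0" using astar_cases by blast
      then show ?thesis using eq opt tnz npos by (intro exI[of _ "-(t * n)"] exI[of _ astar]) auto
    qed
  qed
  have part1': "dim {v :: real^'n. (\<forall>j. j \<notin> nzcols H So \<longrightarrow> v $ j = 0)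
                 \<and> (\<forall>i \<in> So - C2 - C1. (U *v v) $ i = 0)} = 1"
    using part1 unfolding V_def X_def .
  show ?thesis using part1' part2 by blast
qed
end
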